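(* Let $N=(G=(V,E),\sigma,u,s)$ be a skew-symmetric network, $f$ an IS-flow in $N$, $g$ a shortest IS-flow in the network $(G^+,u_f)$, and $f':=f\oplus g$. Let $k$ and $k'$ be the minimum numbers of arcs of an r-augmenting path for $f$ and for $f'$, respectively (with $\min\emptyset=+\infty$). Then $k'\ge k$. Moreover, if $g$ is a shortest blocking IS-flow in $(G^+,u_f)$, then $k'>k$.
   Context: A skew-symmetric graph is a finite directed graph $G=(V,E)$ (parallel arcs allowed) with a map $\sigma$ of $V\cup E$ onto itself such that $\sigma(x)\ne x$, $\sigma(\sigma(x))=x$ for all $x$, $\sigma(V)=V$, and for each arc $a$ from $v$ to $w$, $\sigma(a)$ is an arc from $\sigma(w)$ to $\sigma(v)$. A function on arcs is symmetric if it takes equal values on $a$ and $\sigma(a)$. A skew-symmetric network $(H,\sigma,h,s)$ has a symmetric capacity $h:$ arcs $\to\mathbb Z_{\ge0}$ and source $s$, sink $s'=\sigma(s)$. A flow is a nonnegative function bounded by the capacity with conservation at all nodes other than $s,s'$; its value $|g|$ is the net outflow at $s$. An IS-flow is an integer-valued symmetric flow. $G^+=(V,E^+)$ is obtained from $G$ by adding for each arc $a=(x,y)\in E$ a reverse arc $a^R=(y,x)$, with $\sigma(a^R)=(\sigma(a))^R$; residual capacities $u_f(a)=u(a)-f(a)$ for $a\in E$, $u_f(a^R)=f(a)$; $(G^+,u_f)$ is a skew-symmetric network. For an IS-flow $g$ in $(G^+,u_f)$, $f\oplus g$ is the IS-flow in $N$ given by $(f\oplus g)(a)=f(a)+g(a)-g(a^R)$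 for $a\in E$. For symmetric nonnegative integer $h$, a path $P$ is $h$-regular if $h(a)>0$ for all arcs $a$ of $P$ and $h(a)\ge2$ for every arc $a$ of $P$ whose mate $\sigma(a)$ is also on $P$. An r-augmenting path for $f$ is a $u_f$-regular path from $s$ to $s'$ in $G^+$. A regular path is one containing no pair of arcs $a,\sigma(a)$. The split-graph $S(H,h)$ replaces each arc $a=(x,y)$ by parallel arcs $a_1,a_2$ from $x$ to $y$ with capacities $\lceil h(a)/2\rceil,\lfloor h(a)/2\rfloor$, deleting zero-capacity arcs, with $\sigma(a_i)=(\sigma(a))_i$. $\mathrm{r\text{-}dist}_{S(H,h)}(s,s')$ is the minimum number of arcs of a regular $s$ to $s'$ path in $S(H,h)$ ($+\infty$ if none). For an IS-flow $g$ in $(H,h)$ with arc set $W$: $g$ is shortest if $\sum_{e\in W}g(e)=|g|\cdot\mathrm{r\text{-}dist}_{S(H,h)}(s,s')$; $g$ is shortest blocking if it is shortest and $\mathrm{r\text{-}dist}_{S(H,h-g)}(s,s')>\mathrm{r\text{-}dist}_{S(H,h)}(s,s')$. *)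

theory Defs
  imports Main "HOL-Library.Extended_Nat"
begin

text \<open>The skew-symmetry sigma is split into a map sv on
 vertices and a map se on arcs.  Capacities and flows are integer-valued functions
 on arcs (only their values on E matter).\<close>

definition skew_sym_graph ::
  "'v set \<Rightarrow> 'a set \<Rightarrow> ('a \<Rightarrow> 'v) \<Rightarrow> ('a \<Rightarrow> 'v) \<Rightarrow> ('v \<Rightarrow> 'v) \<Rightarrow> ('a \<Rightarrow> 'a) \<Rightarrow> bool" where
  "skew_sym_graph V E src tgt sv se \<longleftrightarrow>
     finite V \<and> finite E \<and>
     (\<forall>a\<in>E. src a \<in> V \<and> tgt a \<in> V) \<and>
     (\<forall>v\<in>V. sv v \<in> V \<and> sv v \<noteq> v \<and> sv (sv v) = v) \<and>
     (\<forall>a\<in>E. se a \<in> E \<and> se a \<noteq> a \<and> se (se a) = a \<and>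
              src (se a) = sv (tgt a) \<and> tgt (se a) = sv (src a))"

definition symmetric_on :: "'a set \<Rightarrow> ('a \<Rightarrow> 'a) \<Rightarrow> ('a \<Rightarrow> int) \<Rightarrow> bool" where
  "symmetric_on E se h \<longleftrightarrow> (\<forall>a\<in>E. h (se a) = h a)"

text \<open>Skew-symmetric network (G, sigma, u, s); the sink is sv s.\<close>
definition skew_network ::
  "'v set \<Rightarrow> 'a set \<Rightarrow> ('a \<Rightarrow> 'v) \<Rightarrow> ('a \<Rightarrow> 'v) \<Rightarrow> ('v \<Rightarrow> 'v) \<Rightarrow> ('a \<Rightarrow> 'a)
    \<Rightarrow> ('a \<Rightarrow> int) \<Rightarrow> 'v \<Rightarrow> bool" where
  "skew_network V E src tgt sv se u s \<longleftrightarrow>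
     skew_sym_graph V E src tgt sv se \<and> (\<forall>a\<in>E. 0 \<le> u a) \<and> symmetric_on E se u \<and> s \<in> V"

definition is_flow ::
  "'v set \<Rightarrow> 'a set \<Rightarrow> ('a \<Rightarrow> 'v) \<Rightarrow> ('a \<Rightarrow> 'v) \<Rightarrow> ('a \<Rightarrow> int) \<Rightarrow> 'v \<Rightarrow> 'v \<Rightarrow> ('a \<Rightarrow> int) \<Rightarrow> bool" where
  "is_flow V E src tgt cap s t f \<longleftrightarrow>
     (\<forall>a\<in>E. 0 \<le> f a \<and> f a \<le> cap a) \<and>
     (\<forall>v\<in>V - {s, t}. (\<Sum>a\<in>{a\<in>E. tgt a = v}. f a) = (\<Sum>a\<in>{a\<in>E. src a = v}. f a))"

definition flow_val :: "'a set \<Rightarrow> ('a \<Rightarrow> 'v) \<Rightarrow> ('a \<Rightarrow> 'v) \<Rightarrow> 'v \<Rightarrow> ('a \<Rightarrow> int) \<Rightarrow> int" where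
  "flow_val E src tgt s f = (\<Sum>a\<in>{a\<in>E. src a = s}. f a) - (\<Sum>a\<in>{a\<in>E. tgt a = s}. f a)"

text \<open>IS-flow (integrality is built into the type int).\<close>
definition is_IS_flow ::
  "'v set \<Rightarrow> 'a set \<Rightarrow> ('a \<Rightarrow> 'v) \<Rightarrow> ('a \<Rightarrow> 'v) \<Rightarrow> ('a \<Rightarrow> 'a) \<Rightarrow> ('a \<Rightarrow> int) \<Rightarrow> 'v \<Rightarrow> 'v
     \<Rightarrow> ('a \<Rightarrow> int) \<Rightarrow> bool" where
  "is_IS_flow V E src tgt se cap s t f \<longleftrightarrow> is_flow V E src tgt cap s t f \<and> symmetric_on E se f"

definition is_path :: "'a set \<Rightarrow> ('a \<Rightarrow> 'v) \<Rightarrow> ('a \<Rightarrow> 'v) \<Rightarrow> 'v \<Rightarrow> 'v \<Rightarrow> 'a list \<Rightarrow> bool" where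
  "is_path E src tgt x y P \<longleftrightarrow>
     P \<noteq> [] \<and> set P \<subseteq> E \<and> src (List.hd P) = x \<and> tgt (List.last P) = y \<and>
     (\<forall>i. Suc i < length P \<longrightarrow> tgt (P ! i) = src (P ! Suc i))"

definition h_regular :: "('a \<Rightarrow> 'a) \<Rightarrow> ('a \<Rightarrow> int) \<Rightarrow> 'a list \<Rightarrow> bool" where
  "h_regular se h P \<longleftrightarrow> (\<forall>a\<in>set P. 0 < h a \<and> (se a \<in> set P \<longrightarrow> 2 \<le> h a))"

definition regular :: "('a \<Rightarrow> 'a) \<Rightarrow> 'a list \<Rightarrow> bool" where
  "regular se P \<longleftrightarrow> (\<forall>a\<in>set P. se a \<notin> set P)"

text \<open>Minimum number of arcs over a set of paths; Inf {} = \<infinity>.\<close>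
definition min_len :: "'a list set \<Rightarrow> enat" where
  "min_len S = (INF P\<in>S. enat (length P))"

text \<open>The graph G+: arc (a,True) is a, arc (a,False) is the reverse arc a^R.\<close>
definition plus_E :: "'a set \<Rightarrow> ('a \<times> bool) set" where
  "plus_E E = E \<times> UNIV"
definition plus_src :: "('a \<Rightarrow> 'v) \<Rightarrow> ('a \<Rightarrow> 'v) \<Rightarrow> 'a \<times> bool \<Rightarrow> 'v" where
  "plus_src src tgt = (\<lambda>(a, b). if b then src a else tgt a)"
definition plus_tgt :: "('a \<Rightarrow> 'v) \<Rightarrow> ('a \<Rightarrow> 'v) \<Rightarrow> 'a \<times> bool \<Rightarrow> 'v" where
  "plus_tgt src tgt = (\<lambda>(a, b). if b then tgt a else src a)"
definition plus_se :: "('a \<Rightarrow> 'a) \<Rightarrow> 'a \<times> bool \<Rightarrow> 'a \<times> bool" where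
  "plus_se se = (\<lambda>(a, b). (se a, b))"

definition resid :: "('a \<Rightarrow> int) \<Rightarrow> ('a \<Rightarrow> int) \<Rightarrow> 'a \<times> bool \<Rightarrow> int" where
  "resid u f = (\<lambda>(a, b). if b then u a - f a else f a)"

definition oplus :: "('a \<Rightarrow> int) \<Rightarrow> ('a \<times> bool \<Rightarrow> int) \<Rightarrow> 'a \<Rightarrow> int" where
  "oplus f g = (\<lambda>a. f a + g (a, True) - g (a, False))"

definition r_aug_len ::
  "'a set \<Rightarrow> ('a \<Rightarrow> 'v) \<Rightarrow> ('a \<Rightarrow> 'v) \<Rightarrow> ('v \<Rightarrow> 'v) \<Rightarrow> ('a \<Rightarrow> 'a) \<Rightarrow> ('a \<Rightarrow> int) \<Rightarrow> 'v
     \<Rightarrow> ('a \<Rightarrow> int) \<Rightarrow> enat" where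
  "r_aug_len E src tgt sv se u s f =
     min_len {P. is_path (plus_E E) (plus_src src tgt) (plus_tgt src tgt) s (sv s) P \<and>
                 h_regular (plus_se se) (resid u f) P}"

text \<open>Split graph S(H,h): arc (a,True) = a_1 with capacity ceil(h a/2),
 arc (a,False) = a_2 with capacity floor(h a/2); zero-capacity arcs deleted.\<close>
definition split_E :: "'a set \<Rightarrow> ('a \<Rightarrow> int) \<Rightarrow> ('a \<times> bool) set" where
  "split_E E h = {(a, True) | a. a \<in> E \<and> 0 < (h a + 1) div 2} \<union>
                 {(a, False) | a. a \<in> E \<and> 0 < h a div 2}"
definition split_map :: "('a \<Rightarrow> 'b) \<Rightarrow> 'a \<times> bool \<Rightarrow> 'b" where
  "split_map src = (\<lambda>(a, i). src a)"
definition split_se :: "('a \<Rightarrow> 'a) \<Rightarrow> 'a \<times> bool \<Rightarrow> 'a \<times> bool" where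
  "split_se se = (\<lambda>(a, i). (se a, i))"

definition r_dist ::
  "'a set \<Rightarrow> ('a \<Rightarrow> 'v) \<Rightarrow> ('a \<Rightarrow> 'v) \<Rightarrow> ('a \<Rightarrow> 'a) \<Rightarrow> ('a \<Rightarrow> int) \<Rightarrow> 'v \<Rightarrow> 'v \<Rightarrow> enat" where
  "r_dist E src tgt se h s t =
     min_len {P. is_path (split_E E h) (split_map src) (split_map tgt) s t P \<and> regular (split_se se) P}"

text \<open>Shortest IS-flow g in (H,h): sum of g over arcs = |g| * r-dist,
  with the convention 0 * \<infinity> = 0 (so for r-dist = \<infinity> both sides must vanish).\<close>
definition shortest ::
  "'a set \<Rightarrow> ('a \<Rightarrow> 'v) \<Rightarrow> ('a \<Rightarrow> 'v) \<Rightarrow> ('a \<Rightarrow> 'a) \<Rightarrow> ('a \<Rightarrow> int) \<Rightarrow> 'v \<Rightarrow> 'v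
     \<Rightarrow> ('a \<Rightarrow> int) \<Rightarrow> bool" where
  "shortest E src tgt se h s t g \<longleftrightarrow>
     (case r_dist E src tgt se h s t of
        enat d \<Rightarrow> (\<Sum>e\<in>E. g e) = flow_val E src tgt s g * int d
      | \<infinity> \<Rightarrow> flow_val E src tgt s g = 0 \<and> (\<Sum>e\<in>E. g e) = 0)"

definition shortest_blocking ::
  "'a set \<Rightarrow> ('a \<Rightarrow> 'v) \<Rightarrow> ('a \<Rightarrow> 'v) \<Rightarrow> ('a \<Rightarrow> 'a) \<Rightarrow> ('a \<Rightarrow> int) \<Rightarrow> 'v \<Rightarrow> 'v
     \<Rightarrow> ('a \<Rightarrow> int) \<Rightarrow> bool" where
  "shortest_blocking E src tgt se h s t g \<longleftrightarrow>
     shortest E src tgt se h s t g \<and>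
     r_dist E src tgt se h s t < r_dist E src tgt se (\<lambda>e. h e - g e) s t"

end

theory Submission
  imports Defs
begin


fun walk :: "'e set \<Rightarrow> ('e \<Rightarrow> 'v) \<Rightarrow> ('e \<Rightarrow> 'v) \<Rightarrow> 'v \<Rightarrow> 'e list \<Rightarrow> 'v \<Rightarrow> bool" where
  "walk E sH tH x [] y = (x = y)"
| "walk E sH tH x (a # W) y = (a \<in> E \<and> sH a = x \<and> walk E sH tH (tH a) W y)"

lemma walk_append: "walk E sH tH x (A @ B) y \<longleftrightarrow> (\<exists>m. walk E sH tH x A m \<and> walk E sH tH m B y)"
  by (induction A arbitrary: x) auto

lemma walk_arr_dep: "walk E sH tH x W y \<Longrightarrow>
  int (length (filter (\<lambda>a. tH a = w) W)) - int (length (filter (\<lambda>a. sH a = w) W))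
   = (if w = y then 1 else 0) - (if w = x then 1 else 0)"
proof (induction W arbitrary: x)
  case Nil
  then show ?case by simp
next
  case (Cons a W)
  then have x: "sH a = x" and w: "walk E sH tH (tH a) W y" by auto
  have IH: "int (length (filter (\<lambda>a. tH a = w) W)) - int (length (filter (\<lambda>a. sH a = w) W))
   = (if w = y then 1 else 0) - (if w = tH a then 1 else 0)" using Cons.IH[OF w] .
  have e1: "int (length (filter (\<lambda>a. tH a = w) (a # W))) = (if tH a = w then 1 else 0) + int (length (filter (\<lambda>a. tH a = w) W))"
    by simp
  have e2: "int (length (filter (\<lambda>a. sH a = w) (a # W))) = (if sH a = w then 1 else 0) + int (length (filter (\<lambda>a. sH a = w) W))"
    by simp
  show ?case unfolding e1 e2 using IH x by auto
qed

lemma walk_set: "walk E sH tH x W y \<Longrightarrow> set W \<subseteq> E"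
  by (induction W arbitrary: x) auto

lemma sum_count: "finite E \<Longrightarrow> set W \<subseteq> E \<Longrightarrow>
  (\<Sum>a\<in>{a\<in>E. P a}. int (count_list W a)) = int (length (filter P W))"
proof (induction W)
  case Nil
  then show ?case by simp
next
  case (Cons b W)
  have "(\<Sum>a\<in>{a\<in>E. P a}. int (count_list (b # W) a)) =
        (\<Sum>a\<in>{a\<in>E. P a}. (if b = a then 1 else 0) + int (count_list W a))"
    by (rule sum.cong) auto
  also have "\<dots> = (\<Sum>a\<in>{a\<in>E. P a}. (if b = a then 1 else 0)) + (\<Sum>a\<in>{a\<in>E. P a}. int (count_list W a))"
    by (rule sum.distrib)
  also have "\<dots> = (if P b then 1 else 0) + int (length (filter P W))"
    using Cons by (simp add: sum.delta)
  finally show ?case by simp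
qed



lemma idx_Cons: "(\<forall>i. Suc i < length (a # b # R) \<longrightarrow> tH ((a # b # R) ! i) = sH ((a # b # R) ! Suc i)) \<longleftrightarrow>
        tH a = sH b \<and> (\<forall>i. Suc i < length (b # R) \<longrightarrow> tH ((b # R) ! i) = sH ((b # R) ! Suc i))"
  (is "?L \<longleftrightarrow> ?R")
proof
  assume L: ?L
  have "tH a = sH b" using L[rule_format, of 0] by simp
  moreover have "\<forall>i. Suc i < length (b # R) \<longrightarrow> tH ((b # R) ! i) = sH ((b # R) ! Suc i)"
  proof (intro allI impI)
    fix i assume "Suc i < length (b # R)"
    then have "Suc (Suc i) < length (a # b # R)" by simp
    from L[rule_format, OF this] show "tH ((b # R) ! i) = sH ((b # R) ! Suc i)" by simp
  qed
  ultimately show ?R by blast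
next
  assume R: ?R
  show ?L
  proof (intro allI impI)
    fix i assume i: "Suc i < length (a # b # R)"
    show "tH ((a # b # R) ! i) = sH ((a # b # R) ! Suc i)"
    proof (cases i)
      case 0 then show ?thesis using R by simp
    next
      case (Suc j)
      then have "Suc j < length (b # R)" using i by simp
      then show ?thesis using R Suc by simp
    qed
  qed
qed

lemma is_path_walk: "is_path E sH tH x y P \<longleftrightarrow> P \<noteq> [] \<and> walk E sH tH x P y"
proof (induction P arbitrary: x)
  case Nil
  then show ?case by (simp add: is_path_def)
next
  case (Cons a Q)
  show ?case
  proof (cases Q)
    case Nil
    then show ?thesis by (auto simp: is_path_def)
  next
    case (Cons b R)
    have "is_path E sH tH x y (a # b # R) \<longleftrightarrow> a \<in> E \<and> sH a = x \<and> tH a = sH b \<and> is_path E sH tH (tH a) y (b # R)"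
      unfolding is_path_def idx_Cons by auto
    then show ?thesis using Cons.IH Cons by auto
  qed
qed



locale skg =
  fixes V :: "'v set" and EH :: "'e set" and sH tH :: "'e \<Rightarrow> 'v" and sv :: "'v \<Rightarrow> 'v"
    and se :: "'e \<Rightarrow> 'e"
  assumes skew: "skew_sym_graph V EH sH tH sv se"
begin

lemma finV: "finite V" and finE: "finite EH"
  and endsV: "a \<in> EH \<Longrightarrow> sH a \<in> V" "a \<in> EH \<Longrightarrow> tH a \<in> V"
  and svV: "v \<in> V \<Longrightarrow> sv v \<in> V" "v \<in> V \<Longrightarrow> sv v \<noteq> v" "v \<in> V \<Longrightarrow> sv (sv v) = v"
  and seE: "a \<in> EH \<Longrightarrow> se a \<in> EH" "a \<in> EH \<Longrightarrow> se a \<noteq> a" "a \<in> EH \<Longrightarrow> se (se a) = a"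
  and se_ends: "a \<in> EH \<Longrightarrow> sH (se a) = sv (tH a)" "a \<in> EH \<Longrightarrow> tH (se a) = sv (sH a)"
  using skew unfolding skew_sym_graph_def by auto

lemma walk_V: "walk EH sH tH x W y \<Longrightarrow> x \<in> V \<Longrightarrow> y \<in> V"
  by (induction W arbitrary: x) (auto simp: endsV)

lemma reindex_all: "(\<Sum>a\<in>EH. F (se a)) = (\<Sum>a\<in>EH. F a)"
  by (rule sum.reindex_bij_witness[where i=se and j=se]) (auto simp: seE)

lemma reindex_O: "v \<in> V \<Longrightarrow> (\<Sum>a\<in>{a\<in>EH. sH a = v}. F (se a)) = (\<Sum>b\<in>{b\<in>EH. tH b = sv v}. F b)"
  by (rule sum.reindex_bij_witness[where i=se and j=se]) (auto simp: seE se_ends svV)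

lemma reindex_I: "v \<in> V \<Longrightarrow> (\<Sum>a\<in>{a\<in>EH. tH a = v}. F (se a)) = (\<Sum>b\<in>{b\<in>EH. sH b = sv v}. F b)"
  by (rule sum.reindex_bij_witness[where i=se and j=se]) (auto simp: seE se_ends svV)

definition uW :: "'e list \<Rightarrow> 'e \<Rightarrow> int" where
  "uW W a = int (count_list W a) + int (count_list W (se a))"

abbreviation arr where "arr W w \<equiv> int (length (filter (\<lambda>a. tH a = w) W))"
abbreviation dep where "dep W w \<equiv> int (length (filter (\<lambda>a. sH a = w) W))"

lemma sum_uW_O: "set W \<subseteq> EH \<Longrightarrow> w \<in> V \<Longrightarrow>
   (\<Sum>a\<in>{a\<in>EH. sH a = w}. uW W a) = dep W w + arr W (sv w)"
  unfolding uW_def sum.distrib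
  using reindex_O[of w "\<lambda>a. int (count_list W a)"] sum_count[OF finE, of W] by simp

lemma sum_uW_I: "set W \<subseteq> EH \<Longrightarrow> w \<in> V \<Longrightarrow>
   (\<Sum>a\<in>{a\<in>EH. tH a = w}. uW W a) = arr W w + dep W (sv w)"
  unfolding uW_def sum.distrib
  using reindex_I[of w "\<lambda>a. int (count_list W a)"] sum_count[OF finE, of W] by simp

lemma sum_uW_all: "set W \<subseteq> EH \<Longrightarrow> (\<Sum>a\<in>EH. uW W a) = 2 * int (length W)"
proof -
  assume W: "set W \<subseteq> EH"
  have "(\<Sum>a\<in>EH. int (count_list W a)) = int (length W)"
    using sum_count[OF finE W, of "\<lambda>_. True"] by simp
  then show ?thesis unfolding uW_def sum.distrib
    using reindex_all[of "\<lambda>a. int (count_list W a)"] by simp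
qed

lemma uW_sym: "a \<in> EH \<Longrightarrow> uW W (se a) = uW W a"
  unfolding uW_def by (simp add: seE)

definition sflow :: "'v \<Rightarrow> ('e \<Rightarrow> int) \<Rightarrow> bool" where
  "sflow s z \<longleftrightarrow> (\<forall>a\<in>EH. 0 \<le> z a \<and> z (se a) = z a) \<and>
     (\<forall>v\<in>V - {s, sv s}. (\<Sum>a\<in>{a\<in>EH. tH a = v}. z a) = (\<Sum>a\<in>{a\<in>EH. sH a = v}. z a))"

end


context skg begin

lemma uW_snoc: "uW (W @ [e]) a = uW W a + (if e = a then 1 else 0) + (if e = se a then 1 else 0)"
  unfolding uW_def by simp

lemma greedy:
  assumes s: "s \<in> V" and z: "sflow s z" and val: "flow_val EH sH tH s z > 0"
  shows "walk EH sH tH s W v \<Longrightarrow> (\<forall>a\<in>EH. uW W a \<le> z a) \<Longrightarrow>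
    \<exists>R. walk EH sH tH s (W @ R) (sv s) \<and> (\<forall>a\<in>EH. uW (W @ R) a \<le> z a)"
proof (induction "nat (\<Sum>a\<in>EH. z a - uW W a)" arbitrary: W v rule: less_induct)
  case less
  note wk = less.prems(1) and le = less.prems(2)
  show ?case
  proof (cases "v = sv s")
    case True
    then show ?thesis using wk le by (rule_tac x="[]" in exI) auto
  next
    case False
    have vV: "v \<in> V" using walk_V[OF wk s] .
    have WE: "set W \<subseteq> EH" using walk_set[OF wk] .
    define Out where "Out = {a\<in>EH. sH a = v}"
    define Inn where "Inn = {a\<in>EH. tH a = v}"
    have SO: "(\<Sum>a\<in>Out. uW W a) = dep W v + arr W (sv v)" unfolding Out_def using sum_uW_O[OF WE vV] .
    have SI: "(\<Sum>a\<in>Inn. uW W a) = arr W v + dep W (sv v)" unfolding Inn_def using sum_uW_I[OF WE vV] .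
    have d1: "arr W v - dep W v = 1 - (if v = s then 1 else 0)"
      using walk_arr_dep[OF wk, of v] by simp
    have d2: "arr W (sv v) - dep W (sv v) = - (if sv v = s then 1 else 0)"
      using walk_arr_dep[OF wk, of "sv v"] svV[OF vV] by simp
    have SIz: "(\<Sum>a\<in>Inn. uW W a) \<le> (\<Sum>a\<in>Inn. z a)"
      by (rule sum_mono) (use le in \<open>auto simp: Inn_def\<close>)
    have lt: "(\<Sum>a\<in>Out. uW W a) < (\<Sum>a\<in>Out. z a)"
    proof (cases "v = s")
      case True
      then have "sv v \<noteq> s" using svV[OF vV] by simp
      moreover have "(\<Sum>a\<in>Out. z a) - (\<Sum>a\<in>Inn. z a) = flow_val EH sH tH s z"
        unfolding flow_val_def Out_def Inn_def using True by simp
      ultimately show ?thesis using SO SI d1 d2 SIz val True by simp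
    next
      case vs: False
      have "sv v \<noteq> s" using False svV[OF vV] s by auto
      moreover have "(\<Sum>a\<in>Out. z a) = (\<Sum>a\<in>Inn. z a)"
        using z vV vs False unfolding sflow_def Out_def Inn_def by auto
      ultimately show ?thesis using SO SI d1 d2 SIz vs by simp
    qed
    obtain e where eO: "e \<in> Out" and elt: "uW W e < z e"
    proof -
      { assume "\<forall>e\<in>Out. z e \<le> uW W e"
        then have "(\<Sum>a\<in>Out. z a) \<le> (\<Sum>a\<in>Out. uW W a)" by (intro sum_mono) auto
        then have False using lt by simp }
      then show ?thesis using that by force
    qed
    have eE: "e \<in> EH" and esrc: "sH e = v" using eO by (auto simp: Out_def)
    have wk2: "walk EH sH tH s (W @ [e]) (tH e)"
      unfolding walk_append using wk eE esrc by auto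
    have le2: "\<forall>a\<in>EH. uW (W @ [e]) a \<le> z a"
    proof
      fix a assume aE: "a \<in> EH"
      show "uW (W @ [e]) a \<le> z a"
      proof (cases "a = e")
        case True
        then show ?thesis using elt seE[OF eE] by (simp add: uW_snoc)
      next
        case ne: False
        show ?thesis
        proof (cases "a = se e")
          case True
          have "uW W a = uW W e" using True uW_sym[OF eE] by simp
          moreover have "z a = z e" using True z eE unfolding sflow_def by auto
          ultimately show ?thesis using True ne elt seE[OF eE] by (simp add: uW_snoc)
        next
          case False
          have "e \<noteq> se a" using False seE[OF aE] by auto
          then show ?thesis using ne le aE by (simp add: uW_snoc)
        qed
      qed
    qed
    have "(\<Sum>a\<in>EH. z a - uW (W @ [e]) a) < (\<Sum>a\<in>EH. z a - uW W a)"
    proof (rule sum_strict_mono_ex1[OF finE])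
      show "\<forall>x\<in>EH. z x - uW (W @ [e]) x \<le> z x - uW W x" by (simp add: uW_snoc)
      show "\<exists>a\<in>EH. z a - uW (W @ [e]) a < z a - uW W a" using eE by (intro bexI[of _ e]) (auto simp: uW_snoc)
    qed
    moreover have "0 \<le> (\<Sum>a\<in>EH. z a - uW (W @ [e]) a)"
      using le2 by (intro sum_nonneg) auto
    ultimately have "nat (\<Sum>a\<in>EH. z a - uW (W @ [e]) a) < nat (\<Sum>a\<in>EH. z a - uW W a)" by simp
    from less.hyps[OF this wk2 le2] obtain R where
      "walk EH sH tH s (W @ [e] @ R) (sv s)" "\<forall>a\<in>EH. uW (W @ [e] @ R) a \<le> z a" by auto
    then show ?thesis by (rule_tac x="e # R" in exI) auto
  qed
qed

end


lemma h_regular_mono: "h_regular se h1 P \<Longrightarrow> set P \<subseteq> E \<Longrightarrow> \<forall>a\<in>E. h1 a \<le> h2 a \<Longrightarrow> h_regular se h2 P"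
  unfolding h_regular_def by (meson less_le_trans order_trans subsetD)

context skg begin

lemma count_pos: "a \<in> set W \<Longrightarrow> 1 \<le> int (count_list W a)"
  using count_list_0_iff[of W a] by simp

lemma uW_regular: "set W \<subseteq> EH \<Longrightarrow> \<forall>a\<in>EH. uW W a \<le> z a \<Longrightarrow> h_regular se z W"
  unfolding h_regular_def
proof (intro ballI conjI impI)
  fix a assume W: "set W \<subseteq> EH" and le: "\<forall>a\<in>EH. uW W a \<le> z a" and a: "a \<in> set W"
  have aE: "a \<in> EH" using W a by auto
  have "1 \<le> uW W a" unfolding uW_def using count_pos[OF a] by simp
  then show "0 < z a" using le aE by force
  assume "se a \<in> set W"
  then have "2 \<le> uW W a" unfolding uW_def using count_pos[OF a] count_pos[of "se a" W] by simp
  then show "2 \<le> z a" using le aE by force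
qed

lemma avg:
  assumes s: "s \<in> V"
  shows "sflow s z \<Longrightarrow> flow_val EH sH tH s z > 0 \<Longrightarrow>
    \<exists>W. W \<noteq> [] \<and> walk EH sH tH s W (sv s) \<and> h_regular se z W \<and>
        int (length W) * flow_val EH sH tH s z \<le> (\<Sum>a\<in>EH. z a)"
proof (induction "nat (\<Sum>a\<in>EH. z a)" arbitrary: z rule: less_induct)
  case less
  note z = less.prems(1) and val = less.prems(2)
  have zpos: "\<forall>a\<in>EH. 0 \<le> z a" and zsym: "\<forall>a\<in>EH. z (se a) = z a"
    using z unfolding sflow_def by auto
  obtain R where wk: "walk EH sH tH s R (sv s)" and le: "\<forall>a\<in>EH. uW R a \<le> z a"
    using greedy[OF s z val, of "[]" s] by (auto simp: uW_def zpos)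
  have sne: "sv s \<noteq> s" using svV[OF s] by simp
  have Rne: "R \<noteq> []" using wk sne by (cases R) auto
  have RE: "set R \<subseteq> EH" using walk_set[OF wk] .
  have regR: "h_regular se z R" using uW_regular[OF RE le] .
  define z2 where "z2 = (\<lambda>a. z a - uW R a)"
  have ssV: "sv s \<in> V" using svV[OF s] by simp
  have z2flow: "sflow s z2"
    unfolding sflow_def
  proof (intro conjI ballI)
    fix a assume aE: "a \<in> EH"
    show "0 \<le> z2 a" using le aE by (simp add: z2_def)
    show "z2 (se a) = z2 a" using zsym aE uW_sym[OF aE] by (simp add: z2_def)
  next
    fix v assume v: "v \<in> V - {s, sv s}"
    then have vV: "v \<in> V" by simp
    have c: "(\<Sum>a\<in>{a\<in>EH. tH a = v}. z a) = (\<Sum>a\<in>{a\<in>EH. sH a = v}. z a)"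
      using z v unfolding sflow_def by auto
    have d1: "arr R v - dep R v = 0" using walk_arr_dep[OF wk, of v] v by simp
    have "sv v \<noteq> sv s" using v svV(3)[OF vV] svV(3)[OF s] by (metis DiffE insertCI)
    moreover have "sv v \<noteq> s" using v svV(3)[OF vV] by (metis DiffE insertCI)
    ultimately have d2: "arr R (sv v) - dep R (sv v) = 0" using walk_arr_dep[OF wk, of "sv v"] by simp
    show "(\<Sum>a\<in>{a\<in>EH. tH a = v}. z2 a) = (\<Sum>a\<in>{a\<in>EH. sH a = v}. z2 a)"
      unfolding z2_def sum_subtractf sum_uW_O[OF RE vV] sum_uW_I[OF RE vV] using c d1 d2 by simp
  qed
  have val2: "flow_val EH sH tH s z2 = flow_val EH sH tH s z - 2"
  proof -
    have d1: "arr R s - dep R s = -1" using walk_arr_dep[OF wk, of s] sne by simp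
    have d2: "arr R (sv s) - dep R (sv s) = 1" using walk_arr_dep[OF wk, of "sv s"] sne by simp
    show ?thesis
      unfolding flow_val_def z2_def sum_subtractf sum_uW_O[OF RE s] sum_uW_I[OF RE s] using d1 d2 by simp
  qed
  have sum2: "(\<Sum>a\<in>EH. z2 a) = (\<Sum>a\<in>EH. z a) - 2 * int (length R)"
    unfolding z2_def sum_subtractf sum_uW_all[OF RE] ..
  have z2pos: "0 \<le> (\<Sum>a\<in>EH. z2 a)"
    using z2flow unfolding sflow_def by (intro sum_nonneg) auto
  have lenR: "1 \<le> int (length R)" using Rne by (cases R) auto
  show ?case
  proof (cases "flow_val EH sH tH s z2 > 0")
    case True
    have "nat (\<Sum>a\<in>EH. z2 a) < nat (\<Sum>a\<in>EH. z a)" using sum2 z2pos lenR by linarith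
    from less.hyps[OF this z2flow True] obtain W2 where
      W2: "W2 \<noteq> []" "walk EH sH tH s W2 (sv s)" "h_regular se z2 W2"
          "int (length W2) * flow_val EH sH tH s z2 \<le> (\<Sum>a\<in>EH. z2 a)" by blast
    have regW2: "h_regular se z W2"
      by (rule h_regular_mono[OF W2(3) walk_set[OF W2(2)]]) (use le in \<open>auto simp: z2_def uW_def\<close>)
    show ?thesis
    proof (cases "length W2 \<le> length R")
      case True
      have "int (length W2) * flow_val EH sH tH s z = int (length W2) * flow_val EH sH tH s z2 + 2 * int (length W2)"
        unfolding val2 by (simp add: algebra_simps)
      also have "\<dots> \<le> (\<Sum>a\<in>EH. z a)" using W2(4) sum2 True by simp
      finally show ?thesis using W2 regW2 by blast
    next
      case False
      have "int (length R) * flow_val EH sH tH s z = int (length R) * flow_val EH sH tH s z2 + 2 * int (length R)"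
        unfolding val2 by (simp add: algebra_simps)
      also have "\<dots> \<le> int (length W2) * flow_val EH sH tH s z2 + 2 * int (length R)"
        using False \<open>flow_val EH sH tH s z2 > 0\<close> by (simp add: mult_right_mono)
      also have "\<dots> \<le> (\<Sum>a\<in>EH. z a)" using W2(4) sum2 by simp
      finally show ?thesis using Rne wk regR by blast
    qed
  next
    case False
    then have "flow_val EH sH tH s z \<le> 2" using val2 by simp
    then have "int (length R) * flow_val EH sH tH s z \<le> int (length R) * 2"
      by (simp add: mult_left_mono)
    also have "\<dots> \<le> (\<Sum>a\<in>EH. z a)" using sum2 z2pos by simp
    finally show ?thesis using Rne wk regR by blast
  qed
qed

end


definition pick :: "('e \<Rightarrow> 'e) \<Rightarrow> 'e \<Rightarrow> bool" where
  "pick se a = ((SOME b. b = a \<or> b = se a) = a)"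

lemma pick_se: assumes "se a \<noteq> a" "se (se a) = a" shows "pick se (se a) = (\<not> pick se a)"
proof -
  have eq: "(\<lambda>b. b = se a \<or> b = se (se a)) = (\<lambda>b. b = a \<or> b = se a)" using assms by auto
  define r where "r = (SOME b. b = a \<or> b = se a)"
  have "r = a \<or> r = se a" unfolding r_def by (rule someI[of _ a]) simp
  moreover have "pick se (se a) = (r = se a)" unfolding pick_def r_def eq ..
  moreover have "pick se a = (r = a)" unfolding pick_def r_def ..
  ultimately show ?thesis using assms by auto
qed

lemma walk_map_split:
  "walk E sH tH x P y \<Longrightarrow> \<forall>a\<in>set P. (a, lab a) \<in> E' \<Longrightarrow>
   walk E' (split_map sH) (split_map tH) x (map (\<lambda>a. (a, lab a)) P) y"
  by (induction P arbitrary: x) (auto simp: split_map_def)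

lemma r1:
  assumes inv: "\<forall>a\<in>EH. se a \<noteq> a \<and> se (se a) = a"
    and P: "is_path EH sH tH x y P" and reg: "h_regular se h P"
  shows "r_dist EH sH tH se h x y \<le> enat (length P)"
proof -
  define lab where "lab a = (se a \<notin> set P \<or> pick se a)" for a
  define Q where "Q = map (\<lambda>a. (a, lab a)) P"
  have PE: "set P \<subseteq> EH" using P unfolding is_path_def by auto
  have inE: "\<forall>a\<in>set P. (a, lab a) \<in> split_E EH h"
  proof
    fix a assume a: "a \<in> set P"
    have aE: "a \<in> EH" using a PE by auto
    have h1: "0 < h a" using reg a unfolding h_regular_def by auto
    show "(a, lab a) \<in> split_E EH h"
    proof (cases "lab a")
      case True
      then show ?thesis using aE h1 unfolding split_E_def by auto
    next
      case False
      then have "se a \<in> set P" unfolding lab_def by auto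
      then have "2 \<le> h a" using reg a unfolding h_regular_def by auto
      then show ?thesis using aE False unfolding split_E_def by auto
    qed
  qed
  have Qp: "is_path (split_E EH h) (split_map sH) (split_map tH) x y Q"
    using P walk_map_split[OF _ inE] unfolding is_path_walk Q_def by auto
  have Qr: "regular (split_se se) Q"
    unfolding regular_def
  proof
    fix q assume q: "q \<in> set Q"
    then obtain a where a: "a \<in> set P" and qa: "q = (a, lab a)" unfolding Q_def by auto
    have aE: "a \<in> EH" using a PE by auto
    show "split_se se q \<notin> set Q"
    proof
      assume "split_se se q \<in> set Q"
      then have "(se a, lab a) \<in> set Q" using qa by (simp add: split_se_def)
      then have sa: "se a \<in> set P" and l: "lab (se a) = lab a" unfolding Q_def by auto
      have "lab a = pick se a" using sa unfolding lab_def by simp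
      moreover have "lab (se a) = pick se (se a)" using a inv aE unfolding lab_def by simp
      ultimately show False using l pick_se[of se a] inv aE by auto
    qed
  qed
  have "r_dist EH sH tH se h x y \<le> enat (length Q)"
    unfolding r_dist_def min_len_def by (rule INF_lower) (use Qp Qr in auto)
  then show ?thesis unfolding Q_def by simp
qed



lemma min_attained:
  assumes "S \<noteq> {}"
  shows "\<exists>P\<in>S. min_len S = enat (length P) \<and> (\<forall>Q\<in>S. length P \<le> length Q)"
proof -
  obtain P0 where "P0 \<in> S" using assms by auto
  then obtain P where P: "P \<in> S" and m: "\<forall>Q. Q \<in> S \<longrightarrow> length P \<le> length Q"
    using ex_has_least_nat[of "\<lambda>P. P \<in> S" P0 length] by blast
  have "min_len S = enat (length P)"
    unfolding min_len_def
  proof (rule antisym)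
    show "(INF P\<in>S. enat (length P)) \<le> enat (length P)" by (rule INF_lower[OF P])
    show "enat (length P) \<le> (INF P\<in>S. enat (length P))" by (rule INF_greatest) (use m in auto)
  qed
  then show ?thesis using P m by auto
qed

lemma walk_src: "walk E sH tH x (a # W) y \<Longrightarrow> x = sH a" by simp

lemma walk_shortcut:
  assumes w: "walk E sH tH x P y" and ij: "i < j" "j < length P" and eq: "P ! i = P ! j"
  shows "walk E sH tH x (take i P @ drop j P) y"
proof -
  obtain m1 where a1: "walk E sH tH x (take i P) m1" and b1: "walk E sH tH m1 (drop i P) y"
    using w walk_append[of E sH tH x "take i P" "drop i P" y] by auto
  obtain m2 where a2: "walk E sH tH x (take j P) m2" and b2: "walk E sH tH m2 (drop j P) y"
    using w walk_append[of E sH tH x "take j P" "drop j P" y] by auto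
  have "drop i P = P ! i # drop (Suc i) P" using ij by (simp add: Cons_nth_drop_Suc)
  then have "m1 = sH (P ! i)" using b1 by simp
  moreover have "drop j P = P ! j # drop (Suc j) P" using ij by (simp add: Cons_nth_drop_Suc)
  then have "m2 = sH (P ! j)" using b2 by simp
  ultimately have "m1 = m2" using eq by simp
  then show ?thesis unfolding walk_append using a1 b2 by auto
qed

lemma h_regular_subset: "h_regular se h P \<Longrightarrow> set Q \<subseteq> set P \<Longrightarrow> h_regular se h Q"
  unfolding h_regular_def by blast

lemma minimal_distinct:
  assumes P: "is_path E sH tH x y P" "h_regular se h P"
    and m: "\<forall>Q. is_path E sH tH x y Q \<and> h_regular se h Q \<longrightarrow> length P \<le> length Q"
  shows "distinct P"
proof (rule ccontr)
  assume "\<not> distinct P"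
  then obtain i0 j0 where ij0: "i0 < length P" "j0 < length P" "i0 \<noteq> j0" "P ! i0 = P ! j0"
    unfolding distinct_conv_nth by blast
  define i where "i = min i0 j0"
  define j where "j = max i0 j0"
  have ij: "i < j" "j < length P" using ij0 unfolding i_def j_def by auto
  have eq: "P ! i = P ! j" using ij0 unfolding i_def j_def by (cases "i0 \<le> j0") auto
  define Q where "Q = take i P @ drop j P"
  have w: "walk E sH tH x Q y" using walk_shortcut[OF _ ij eq] P(1) unfolding is_path_walk Q_def by auto
  have ne: "Q \<noteq> []" using ij unfolding Q_def by simp
  have sub: "set Q \<subseteq> set P" unfolding Q_def using set_drop_subset[of j P] set_take_subset[of i P] by auto
  have "is_path E sH tH x y Q" using w ne unfolding is_path_walk by simp
  moreover have "h_regular se h Q" using h_regular_subset[OF P(2) sub] .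
  ultimately have "length P \<le> length Q" using m by blast
  moreover have "length Q < length P" using ij unfolding Q_def by simp
  ultimately show False by simp
qed



context skg begin

lemma uW_flow:
  assumes s: "s \<in> V" and wk: "walk EH sH tH s W (sv s)"
  shows "sflow s (uW W)" "flow_val EH sH tH s (uW W) = 2" "(\<Sum>a\<in>EH. uW W a) = 2 * int (length W)"
proof -
  have WE: "set W \<subseteq> EH" using walk_set[OF wk] .
  have sne: "sv s \<noteq> s" using svV[OF s] by simp
  show "sflow s (uW W)"
    unfolding sflow_def
  proof (intro conjI ballI)
    fix a assume aE: "a \<in> EH"
    show "0 \<le> uW W a" by (simp add: uW_def)
    show "uW W (se a) = uW W a" using uW_sym[OF aE] .
  next
    fix v assume v: "v \<in> V - {s, sv s}"
    then have vV: "v \<in> V" by simp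
    have d1: "arr W v - dep W v = 0" using walk_arr_dep[OF wk, of v] v by simp
    have "sv v \<noteq> sv s" using v svV(3)[OF vV] svV(3)[OF s] by (metis DiffE insertCI)
    moreover have "sv v \<noteq> s" using v svV(3)[OF vV] by (metis DiffE insertCI)
    ultimately have d2: "arr W (sv v) - dep W (sv v) = 0" using walk_arr_dep[OF wk, of "sv v"] by simp
    show "(\<Sum>a\<in>{a\<in>EH. tH a = v}. uW W a) = (\<Sum>a\<in>{a\<in>EH. sH a = v}. uW W a)"
      unfolding sum_uW_O[OF WE vV] sum_uW_I[OF WE vV] using d1 d2 by simp
  qed
  have d1: "arr W s - dep W s = -1" using walk_arr_dep[OF wk, of s] sne by simp
  have d2: "arr W (sv s) - dep W (sv s) = 1" using walk_arr_dep[OF wk, of "sv s"] sne by simp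
  show "flow_val EH sH tH s (uW W) = 2"
    unfolding flow_val_def sum_uW_O[OF WE s] sum_uW_I[OF WE s] using d1 d2 by simp
  show "(\<Sum>a\<in>EH. uW W a) = 2 * int (length W)" using sum_uW_all[OF WE] .
qed

lemma combine:
  assumes rv: "\<And>e. e \<in> EH \<Longrightarrow> rv e \<in> EH \<and> rv (rv e) = e \<and> sH (rv e) = tH e \<and> tH (rv e) = sH e \<and> se (rv e) = rv (se e)"
    and g: "sflow s g" and x: "sflow s x"
    and gh: "\<forall>e\<in>EH. g e \<le> h e"
    and xh: "\<forall>e\<in>EH. x e \<le> h e - g e + g (rv e)"
    and x2_def: "x2 = (\<lambda>e. min (x e) (g (rv e)))"
    and z_def: "z = (\<lambda>e. g e + (x e - x2 e) - x2 (rv e))"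
  shows "sflow s z" "\<forall>e\<in>EH. z e \<le> h e"
    "flow_val EH sH tH s z = flow_val EH sH tH s g + flow_val EH sH tH s x"
    "(\<Sum>e\<in>EH. z e) = (\<Sum>e\<in>EH. g e) + (\<Sum>e\<in>EH. x e) - 2 * (\<Sum>e\<in>EH. x2 e)"
    "\<forall>e\<in>EH. 0 \<le> x2 e"
proof -
  have gp: "\<forall>e\<in>EH. 0 \<le> g e \<and> g (se e) = g e" using g unfolding sflow_def by auto
  have xp: "\<forall>e\<in>EH. 0 \<le> x e \<and> x (se e) = x e" using x unfolding sflow_def by auto
  have rvI: "(\<Sum>e\<in>{e\<in>EH. tH e = v}. F (rv e)) = (\<Sum>e\<in>{e\<in>EH. sH e = v}. F e)" for F v
    by (rule sum.reindex_bij_witness[where i=rv and j=rv]) (use rv in auto)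
  have rvO: "(\<Sum>e\<in>{e\<in>EH. sH e = v}. F (rv e)) = (\<Sum>e\<in>{e\<in>EH. tH e = v}. F e)" for F v
    by (rule sum.reindex_bij_witness[where i=rv and j=rv]) (use rv in auto)
  have rvA: "(\<Sum>e\<in>EH. F (rv e)) = (\<Sum>e\<in>EH. F e)" for F
    by (rule sum.reindex_bij_witness[where i=rv and j=rv]) (use rv in auto)
  have x2sym: "x2 (se e) = x2 e" if e: "e \<in> EH" for e
  proof -
    have "g (rv (se e)) = g (rv e)" using rv[OF e] gp seE[OF e] rv[OF seE(1)[OF e]]
      by (metis)
    then show ?thesis unfolding x2_def using xp e by simp
  qed
  have sumz: "(\<Sum>e\<in>A. z e) = (\<Sum>e\<in>A. g e) + (\<Sum>e\<in>A. x e) - (\<Sum>e\<in>A. x2 e) - (\<Sum>e\<in>A. x2 (rv e))" for A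
    unfolding z_def by (simp add: sum.distrib sum_subtractf)
  show "\<forall>e\<in>EH. 0 \<le> x2 e" using gp xp rv unfolding x2_def by auto
  show "sflow s z"
    unfolding sflow_def
  proof (intro conjI ballI)
    fix e assume e: "e \<in> EH"
    have "x2 (rv e) \<le> g e" unfolding x2_def using rv[OF e] by simp
    moreover have "x2 e \<le> x e" unfolding x2_def by simp
    ultimately show "0 \<le> z e" unfolding z_def using gp e by simp
    have "x2 (rv (se e)) = x2 (rv e)"
      using x2sym[OF conjunct1[OF rv[OF e]]] rv[OF e] by simp
    then show "z (se e) = z e" unfolding z_def using gp xp x2sym[OF e] e by simp
  next
    fix v assume v: "v \<in> V - {s, sv s}"
    have cg: "(\<Sum>a\<in>{a\<in>EH. tH a = v}. g a) = (\<Sum>a\<in>{a\<in>EH. sH a = v}. g a)"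
      using g v unfolding sflow_def by auto
    have cx: "(\<Sum>a\<in>{a\<in>EH. tH a = v}. x a) = (\<Sum>a\<in>{a\<in>EH. sH a = v}. x a)"
      using x v unfolding sflow_def by auto
    show "(\<Sum>a\<in>{a\<in>EH. tH a = v}. z a) = (\<Sum>a\<in>{a\<in>EH. sH a = v}. z a)"
      unfolding sumz rvI rvO using cg cx by simp
  qed
  show "\<forall>e\<in>EH. z e \<le> h e"
  proof
    fix e assume e: "e \<in> EH"
    show "z e \<le> h e"
    proof (cases "x e \<le> g (rv e)")
      case True
      then have "x2 e = x e" unfolding x2_def by simp
      moreover have "0 \<le> x2 (rv e)" unfolding x2_def using rv[OF e] gp xp e by auto
      ultimately show ?thesis unfolding z_def using gh[rule_format, OF e] by linarith
    next
      case False
      then have "x2 e = g (rv e)" unfolding x2_def by simp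
      moreover have "0 \<le> x2 (rv e)" unfolding x2_def using rv[OF e] gp xp e by auto
      ultimately show ?thesis unfolding z_def using xh[rule_format, OF e] by linarith
    qed
  qed
  show "flow_val EH sH tH s z = flow_val EH sH tH s g + flow_val EH sH tH s x"
    unfolding flow_val_def sumz rvI rvO by simp
  show "(\<Sum>e\<in>EH. z e) = (\<Sum>e\<in>EH. g e) + (\<Sum>e\<in>EH. x e) - 2 * (\<Sum>e\<in>EH. x2 e)"
    unfolding sumz rvA by simp
qed

end


lemma plus_skew:
  assumes "skew_network V E src tgt sv se u s"
  shows "skew_sym_graph V (plus_E E) (plus_src src tgt) (plus_tgt src tgt) sv (plus_se se)"
  using assms unfolding skew_network_def skew_sym_graph_def plus_E_def plus_src_def plus_tgt_def plus_se_def
  by auto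

definition rvs :: "'a \<times> bool \<Rightarrow> 'a \<times> bool" where "rvs = (\<lambda>(a, b). (a, \<not> b))"

lemma rvs_props:
  assumes "e \<in> plus_E E"
  shows "rvs e \<in> plus_E E \<and> rvs (rvs e) = e \<and> plus_src src tgt (rvs e) = plus_tgt src tgt e \<and>
         plus_tgt src tgt (rvs e) = plus_src src tgt e \<and> plus_se se (rvs e) = rvs (plus_se se e)"
  using assms unfolding rvs_def plus_E_def plus_src_def plus_tgt_def plus_se_def by (cases e) auto

lemma resid_oplus: "resid u (oplus f g) e = resid u f e - g e + g (rvs e)"
  unfolding resid_def oplus_def rvs_def by (cases e) auto

lemma resid_sym:
  assumes "symmetric_on E se u" "symmetric_on E se f" "e \<in> plus_E E"
  shows "resid u f (plus_se se e) = resid u f e"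
  using assms unfolding symmetric_on_def resid_def plus_se_def plus_E_def by (cases e) auto

lemma min_len_ge1: "min_len S = enat d \<Longrightarrow> \<forall>P\<in>S. P \<noteq> [] \<Longrightarrow> 1 \<le> d"
proof -
  assume m: "min_len S = enat d" and ne: "\<forall>P\<in>S. P \<noteq> []"
  have "1 \<le> min_len S" unfolding min_len_def
  proof (rule INF_greatest)
    fix P assume "P \<in> S"
    then have "1 \<le> length P" using ne by (cases P) auto
    then show "1 \<le> enat (length P)" by (simp add: one_enat_def)
  qed
  then show ?thesis using m by (simp add: one_enat_def)
qed

lemma split_E_cong: "\<forall>e\<in>E. h1 e = h2 e \<Longrightarrow> split_E E h1 = split_E E h2"
  unfolding split_E_def by auto

lemma r_dist_cong: "\<forall>e\<in>E. h1 e = h2 e \<Longrightarrow> r_dist E sH tH se h1 x y = r_dist E sH tH se h2 x y"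
  unfolding r_dist_def using split_E_cong[of E h1 h2] by simp



lemma count_distinct: "distinct W \<Longrightarrow> count_list W a = (if a \<in> set W then 1 else 0)"
  by (induction W) auto

theorem mainTheorem8:
  fixes V :: "'v set" and E :: "'a set" and src tgt :: "'a \<Rightarrow> 'v"
    and sv :: "'v \<Rightarrow> 'v" and se :: "'a \<Rightarrow> 'a" and u f :: "'a \<Rightarrow> int" and s :: 'v
    and g :: "'a \<times> bool \<Rightarrow> int"
  assumes "skew_network V E src tgt sv se u s"
    and "is_IS_flow V E src tgt se u s (sv s) f"
    and "is_IS_flow V (plus_E E) (plus_src src tgt) (plus_tgt src tgt) (plus_se se)
           (resid u f) s (sv s) g"
    and "shortest (plus_E E) (plus_src src tgt) (plus_tgt src tgt) (plus_se se)
           (resid u f) s (sv s) g"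
  shows "r_aug_len E src tgt sv se u s f \<le> r_aug_len E src tgt sv se u s (oplus f g) \<and>
         (shortest_blocking (plus_E E) (plus_src src tgt) (plus_tgt src tgt) (plus_se se)
             (resid u f) s (sv s) g
          \<longrightarrow> r_aug_len E src tgt sv se u s f < r_aug_len E src tgt sv se u s (oplus f g))"
proof -
  note A1 = assms(1) and A2 = assms(2) and A3 = assms(3) and A4 = assms(4)
  define EH where "EH = plus_E E"
  define sH where "sH = plus_src src tgt"
  define tH where "tH = plus_tgt src tgt"
  define \<sigma> where "\<sigma> = plus_se se"
  define h where "h = resid u f"
  define h' where "h' = resid u (oplus f g)"
  interpret H: skg V EH sH tH sv \<sigma>
    unfolding skg_def EH_def sH_def tH_def \<sigma>_def using plus_skew[OF A1] .
  have sV: "s \<in> V" using A1 unfolding skew_network_def by simp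
  have usym: "symmetric_on E se u" using A1 unfolding skew_network_def by simp
  have fsym: "symmetric_on E se f" using A2 unfolding is_IS_flow_def by simp
  have gcap: "\<forall>e\<in>EH. 0 \<le> g e \<and> g e \<le> h e"
    using A3 unfolding is_IS_flow_def is_flow_def EH_def h_def by simp
  have gsym: "\<forall>e\<in>EH. g (\<sigma> e) = g e"
    using A3 unfolding is_IS_flow_def symmetric_on_def EH_def \<sigma>_def by simp
  have gcons: "\<forall>v\<in>V - {s, sv s}. (\<Sum>a\<in>{a\<in>EH. tH a = v}. g a) = (\<Sum>a\<in>{a\<in>EH. sH a = v}. g a)"
    using A3 unfolding is_IS_flow_def is_flow_def EH_def sH_def tH_def by simp
  have gflow: "H.sflow s g"
    unfolding H.sflow_def using gcap gsym gcons by simp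
  have rv: "\<And>e. e \<in> EH \<Longrightarrow> rvs e \<in> EH \<and> rvs (rvs e) = e \<and> sH (rvs e) = tH e \<and> tH (rvs e) = sH e \<and> \<sigma> (rvs e) = rvs (\<sigma> e)"
    unfolding EH_def sH_def tH_def \<sigma>_def by (rule rvs_props)
  have hsym: "\<forall>e\<in>EH. h (\<sigma> e) = h e"
    unfolding h_def \<sigma>_def EH_def using resid_sym[OF usym fsym] by blast
  have h'eq: "\<And>e. h' e = h e - g e + g (rvs e)" unfolding h'_def h_def by (rule resid_oplus)
  have h'sym: "\<forall>e\<in>EH. h' (\<sigma> e) = h' e"
  proof
    fix e assume e: "e \<in> EH"
    have "g (rvs (\<sigma> e)) = g (\<sigma> (rvs e))" using rv[OF e] by simp
    also have "\<dots> = g (rvs e)" using gsym rv[OF e] by blast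
    finally have "g (rvs (\<sigma> e)) = g (rvs e)" .
    then show "h' (\<sigma> e) = h' e" unfolding h'eq using hsym gsym e by simp
  qed
  have h'nn: "\<forall>e\<in>EH. 0 \<le> h' e"
  proof
    fix e assume e: "e \<in> EH"
    have "g e \<le> h e" using gcap e by blast
    moreover have "0 \<le> g (rvs e)" using gcap rv[OF e] by blast
    ultimately show "0 \<le> h' e" unfolding h'eq by linarith
  qed
  have inv: "\<forall>a\<in>EH. \<sigma> a \<noteq> a \<and> \<sigma> (\<sigma> a) = a" using H.seE by blast
  define S where "S = {P. is_path EH sH tH s (sv s) P \<and> h_regular \<sigma> h P}"
  define S' where "S' = {P. is_path EH sH tH s (sv s) P \<and> h_regular \<sigma> h' P}"
  have K: "r_aug_len E src tgt sv se u s f = min_len S"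
    unfolding r_aug_len_def S_def EH_def sH_def tH_def \<sigma>_def h_def ..
  have K': "r_aug_len E src tgt sv se u s (oplus f g) = min_len S'"
    unfolding r_aug_len_def S'_def EH_def sH_def tH_def \<sigma>_def h'_def ..
  define G where "G = flow_val EH sH tH s g"
  define d0 where "d0 = r_dist EH sH tH \<sigma> h s (sv s)"
  have short: "case d0 of enat d \<Rightarrow> (\<Sum>e\<in>EH. g e) = G * int d | \<infinity> \<Rightarrow> G = 0 \<and> (\<Sum>e\<in>EH. g e) = 0"
    using A4 unfolding shortest_def d0_def G_def EH_def sH_def tH_def \<sigma>_def h_def .
  have sumg: "0 \<le> (\<Sum>e\<in>EH. g e)" using gcap by (intro sum_nonneg) auto
  have G0: "0 \<le> G"
  proof (cases d0)
    case (enat d)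
    have "min_len {P. is_path (split_E EH h) (split_map sH) (split_map tH) s (sv s) P \<and> regular (split_se \<sigma>) P} = enat d"
      using enat unfolding d0_def r_dist_def .
    from min_len_ge1[OF this] have "1 \<le> d" by (auto simp: is_path_def)
    have sg: "(\<Sum>e\<in>EH. g e) = G * int d" using short enat by simp
    show ?thesis
    proof (rule ccontr)
      assume "\<not> 0 \<le> G"
      then have "G * int d < 0" using \<open>1 \<le> d\<close> by (simp add: mult_neg_pos)
      then show False using sg sumg by simp
    qed
  next
    case infinity
    then show ?thesis using short by simp
  qed
  have sumg0: "G = 0 \<Longrightarrow> d0 = enat d \<Longrightarrow> \<forall>e\<in>EH. g e = 0" for d
  proof -
    assume "G = 0" "d0 = enat d"
    then have "(\<Sum>e\<in>EH. g e) = 0" using short by simp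
    then show ?thesis using sum_nonneg_eq_0_iff[OF H.finE, of g] gcap by auto
  qed
  have G0block: "G = 0 \<Longrightarrow> d0 = enat d \<Longrightarrow> \<not> d0 < r_dist EH sH tH \<sigma> (\<lambda>e. h e - g e) s (sv s)" for d
  proof -
    assume a: "G = 0" "d0 = enat d"
    have "r_dist EH sH tH \<sigma> (\<lambda>e. h e - g e) s (sv s) = d0"
      unfolding d0_def by (rule r_dist_cong) (use sumg0[OF a] in auto)
    then show ?thesis by simp
  qed
  have blockdef: "shortest_blocking (plus_E E) (plus_src src tgt) (plus_tgt src tgt) (plus_se se)
             (resid u f) s (sv s) g \<Longrightarrow> d0 < r_dist EH sH tH \<sigma> (\<lambda>e. h e - g e) s (sv s)"
    unfolding shortest_blocking_def d0_def EH_def sH_def tH_def \<sigma>_def h_def by (erule conjunct2)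
  have memS: "W \<in> S" if "W \<noteq> []" "walk EH sH tH s W (sv s)" "h_regular \<sigma> h W" for W
    unfolding S_def mem_Collect_eq is_path_walk using that by simp
  show ?thesis
  proof (cases "S' = {}")
    case True
    then have Kinf: "min_len S' = \<infinity>" unfolding min_len_def by (simp add: top_enat_def)
    show ?thesis
    proof (intro conjI impI)
      show "r_aug_len E src tgt sv se u s f \<le> r_aug_len E src tgt sv se u s (oplus f g)"
        unfolding K' Kinf by simp
    next
      assume bl: "shortest_blocking (plus_E E) (plus_src src tgt) (plus_tgt src tgt) (plus_se se)
             (resid u f) s (sv s) g"
      have lt: "d0 < r_dist EH sH tH \<sigma> (\<lambda>e. h e - g e) s (sv s)" using blockdef[OF bl] .
      then obtain d where dd: "d0 = enat d" by (cases d0) auto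
      have "G \<noteq> 0" using G0block[OF _ dd] lt by blast
      then have Gp: "G > 0" using G0 by simp
      obtain W where W: "W \<noteq> []" "walk EH sH tH s W (sv s)" "h_regular \<sigma> g W"
        using H.avg[OF sV gflow] Gp unfolding G_def by blast
      have "h_regular \<sigma> h W"
        by (rule h_regular_mono[OF W(3) walk_set[OF W(2)]]) (use gcap in auto)
      then have "W \<in> S" using memS W by blast
      then have "min_len S \<le> enat (length W)" unfolding min_len_def by (rule INF_lower)
      then show "r_aug_len E src tgt sv se u s f < r_aug_len E src tgt sv se u s (oplus f g)"
        unfolding K K' Kinf using le_less_trans[OF \<open>min_len S \<le> enat (length W)\<close>, of \<infinity>] by simp
    qed
  next
    case False
    obtain P' where P'S: "P' \<in> S'" and KL: "min_len S' = enat (length P')"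
      and Pmin: "\<forall>Q\<in>S'. length P' \<le> length Q"
      using min_attained[OF False] by blast
    have P'path: "is_path EH sH tH s (sv s) P'" and P'reg: "h_regular \<sigma> h' P'" using P'S unfolding S'_def by auto
    have Pmin2: "\<forall>Q. is_path EH sH tH s (sv s) Q \<and> h_regular \<sigma> h' Q \<longrightarrow> length P' \<le> length Q"
      using Pmin unfolding S'_def by auto
    have dist: "distinct P'" using minimal_distinct[OF P'path P'reg Pmin2] .
    have P'walk: "walk EH sH tH s P' (sv s)" and P'ne: "P' \<noteq> []" using P'path unfolding is_path_walk by auto
    have P'E: "set P' \<subseteq> EH" using walk_set[OF P'walk] .
    define L where "L = length P'"
    define x where "x = H.uW P'"
    have xflow: "H.sflow s x" and xval: "flow_val EH sH tH s x = 2" and xsum: "(\<Sum>e\<in>EH. x e) = 2 * int L"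
      using H.uW_flow[OF sV P'walk] unfolding x_def L_def by auto
    have xeq: "x e = (if e \<in> set P' then 1 else 0) + (if \<sigma> e \<in> set P' then 1 else 0)" for e
      unfolding x_def H.uW_def count_distinct[OF dist] by simp
    have xh: "\<forall>e\<in>EH. x e \<le> h e - g e + g (rvs e)"
    proof
      fix e assume e: "e \<in> EH"
      have "x e \<le> h' e"
      proof (cases "e \<in> set P'")
        case True
        have r: "0 < h' e \<and> (\<sigma> e \<in> set P' \<longrightarrow> 2 \<le> h' e)" using P'reg True unfolding h_regular_def by blast
        show ?thesis
        proof (cases "\<sigma> e \<in> set P'")
          case True2: True
          then show ?thesis using r True unfolding xeq by simp
        next
          case False2: False
          then show ?thesis using r True unfolding xeq by simp
        qed
      next
        case False
        show ?thesis
        proof (cases "\<sigma> e \<in> set P'")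
          case True
          then have "0 < h' (\<sigma> e)" using P'reg unfolding h_regular_def by blast
          moreover have "h' (\<sigma> e) = h' e" using h'sym e by blast
          ultimately show ?thesis using False True unfolding xeq by simp
        next
          case False2: False
          have "0 \<le> h' e" using h'nn e by blast
          then show ?thesis using False False2 unfolding xeq by simp
        qed
      qed
      then show "x e \<le> h e - g e + g (rvs e)" unfolding h'eq .
    qed
    define x2 where "x2 = (\<lambda>e. min (x e) (g (rvs e)))"
    define z where "z = (\<lambda>e. g e + (x e - x2 e) - x2 (rvs e))"
    have gh: "\<forall>e\<in>EH. g e \<le> h e" using gcap by auto
    note C = H.combine[OF rv gflow xflow gh xh x2_def z_def]
    have zflow: "H.sflow s z" and zh: "\<forall>e\<in>EH. z e \<le> h e" using C(1,2) by auto
    have zval: "flow_val EH sH tH s z = G + 2" using C(3) xval unfolding G_def by simp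
    have zsum: "(\<Sum>e\<in>EH. z e) = (\<Sum>e\<in>EH. g e) + 2 * int L - 2 * (\<Sum>e\<in>EH. x2 e)"
      using C(4) xsum by simp
    have x2nn: "\<forall>e\<in>EH. 0 \<le> x2 e" using C(5) by simp
    define X where "X = (\<Sum>e\<in>EH. x2 e)"
    have X0: "0 \<le> X" unfolding X_def using x2nn by (intro sum_nonneg) auto
    have zvalpos: "0 < flow_val EH sH tH s z" using zval G0 by simp
    obtain W where W: "W \<noteq> []" "walk EH sH tH s W (sv s)" "h_regular \<sigma> z W"
      and Wineq: "int (length W) * (G + 2) \<le> (\<Sum>e\<in>EH. z e)"
      using H.avg[OF sV zflow zvalpos] zval by auto
    define M where "M = length W"
    have Wh: "h_regular \<sigma> h W"
      by (rule h_regular_mono[OF W(3) walk_set[OF W(2)]]) (use zh in auto)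
    have WS: "W \<in> S" using memS[OF W(1,2) Wh] .
    have KM: "min_len S \<le> enat M" unfolding min_len_def M_def using WS by (rule INF_lower)
    have Wpath: "is_path EH sH tH s (sv s) W" using W(1,2) unfolding is_path_walk by simp
    have dM: "d0 \<le> enat M" unfolding d0_def M_def by (rule r1[OF inv Wpath Wh])
    then obtain d where dd: "d0 = enat d" and dle: "d \<le> M" by (cases d0) auto
    have sg: "(\<Sum>e\<in>EH. g e) = G * int d" using short dd by simp
    have i1: "int M * (G + 2) \<le> G * int d + 2 * int L - 2 * X"
      using Wineq zsum sg unfolding M_def X_def by linarith
    have i2: "G * int d \<le> G * int M" using G0 dle by (simp add: mult_left_mono)
    have i3: "int M * (G + 2) = G * int M + 2 * int M" by (simp add: algebra_simps)
    have Mle: "int M + X \<le> int L" using i1 i2 i3 by linarith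
    have KK': "min_len S \<le> min_len S'"
    proof -
      have "enat M \<le> enat L" using Mle X0 by simp
      with KM have "min_len S \<le> enat L" by (rule order_trans)
      then show ?thesis using KL unfolding L_def by simp
    qed
    show ?thesis
    proof (intro conjI impI)
      show "r_aug_len E src tgt sv se u s f \<le> r_aug_len E src tgt sv se u s (oplus f g)"
        unfolding K K' using KK' .
    next
      assume bl: "shortest_blocking (plus_E E) (plus_src src tgt) (plus_tgt src tgt) (plus_se se)
             (resid u f) s (sv s) g"
      have lt: "d0 < r_dist EH sH tH \<sigma> (\<lambda>e. h e - g e) s (sv s)" using blockdef[OF bl] .
      show "r_aug_len E src tgt sv se u s f < r_aug_len E src tgt sv se u s (oplus f g)"
        unfolding K K'
      proof (rule ccontr)
        assume "\<not> min_len S < min_len S'"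
        then have "min_len S' \<le> min_len S" by simp
        then have "min_len S' \<le> enat M" using KM by (rule order_trans)
        then have LM: "L \<le> M" using KL unfolding L_def by simp
        then have XX: "X = 0" using Mle X0 by simp
        have "G \<noteq> 0" using G0block[OF _ dd] lt by blast
        then have Gp: "0 < G" using G0 by simp
        have "G * int M \<le> G * int d" using i1 i3 LM XX by simp
        then have "M \<le> d" using Gp by simp
        then have Ld: "L \<le> d" using LM by simp
        have x2z: "\<forall>e\<in>EH. x2 e = 0" using XX x2nn sum_nonneg_eq_0_iff[OF H.finE, of x2] unfolding X_def by auto
        have reg2: "h_regular \<sigma> (\<lambda>e. h e - g e) P'"
          unfolding h_regular_def
        proof (intro ballI)
          fix e assume e: "e \<in> set P'"
          have eE: "e \<in> EH" using e P'E by auto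
          have "1 \<le> x e" using e unfolding xeq by auto
          moreover have "x2 e = 0" using x2z eE by auto
          moreover have "0 \<le> g (rvs e)" using gcap rv[OF eE] by auto
          ultimately have "g (rvs e) = 0" unfolding x2_def by linarith
          then have "h' e = h e - g e" unfolding h'eq by simp
          then show "0 < h e - g e \<and> (\<sigma> e \<in> set P' \<longrightarrow> 2 \<le> h e - g e)"
            using P'reg e unfolding h_regular_def by auto
        qed
        have "r_dist EH sH tH \<sigma> (\<lambda>e. h e - g e) s (sv s) \<le> enat L"
          unfolding L_def by (rule r1[OF inv P'path reg2])
        also have "\<dots> \<le> d0" using Ld dd by simp
        finally show False using lt by simp
      qed
    qed
  qed
qed


end
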